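(* Suppose the queries are chosen by GP-TS-SDF, i.e., $x_t\in\arg\max_{x\in\mathcal{Q}}f_t(x)$ where $f_t\sim\mathcal{GP}(\mu_{t-1}(\cdot),\nu_t^2\sigma^2_{t-1}(\cdot))$ given $\mathcal{F}_{t-1}$, and let $r_t=f(x^\star)-f(x_t)$. For any filtration $\mathcal{F}_{t-1}$, conditioned on the event $E^f(t)$, $$\mathbb{E}[r_t\mid\mathcal{F}_{t-1}]\le\frac{11c_t}{\rho_mp}\mathbb{E}[\sigma_{t-1}(x_t)\mid\mathcal{F}_{t-1}]+\frac{2\mathcal{B}_f}{t^2},\qquad p=\frac{1}{4e\sqrt{\pi}}.$$
   Context: Setting. Let $\mathcal{Q}\subset\mathbb{R}^n$ be finite, $k$ a positive semidefinite kernel on $\mathcal{Q}$ with $k\le1$, and $f$ in the RKHS of $k$ with $\|f\|_k\le\mathcal{B}_f$; $x^\star\in\arg\max_{x\in\mathcal{Q}}f(x)$. Queries $x_1,x_2,\ldots$ are selected sequentially; feedback $y_t=f(x_t)+\epsilon_t$ with $R$-sub-Gaussian $\epsilon_t$ and $|y_t|\le\mathcal{B}_y$, observed after a random delay $d_t\in\{0,1,\ldots\}$ drawn from $\mathcal{D}$. For an integer $m\ge1$, $\rho_m=\mathbb{P}(d_s\le m)$, censored feedback $\tilde y_{s,t}=y_s\mathbb{1}\{d_s\le\min(m,t-s)\}$. With $\lambda>0$: $\mu_{t-1}(x)=\mathbf{k}_{t-1}(x)^\top(\mathbf{K}_{t-1}+\lambda I)^{-1}\tilde{\mathbf{y}}_{t-1}$,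 $\sigma^2_{t-1}(x,x')=k(x,x')-\mathbf{k}_{t-1}(x)^\top(\mathbf{K}_{t-1}+\lambda I)^{-1}\mathbf{k}_{t-1}(x')$, $\sigma^2_{t-1}(x)=\sigma^2_{t-1}(x,x)$, $\mathbf{k}_{t-1}(x)=(k(x,x_i))_{i\le t-1}$, $\mathbf{K}_{t-1}=(k(x_i,x_j))_{i,j\le t-1}$, $\tilde{\mathbf{y}}_{t-1}=(\tilde y_{s,t})_{s\le t-1}$. $\gamma_t=\max_A\frac12\log\det(I+\lambda^{-1}\mathbf{K}_A)$ over collections of $t$ points. For $\delta\in(0,1)$: $\beta_t=\mathcal{B}_f+(R+\mathcal{B}_y)\sqrt{2(\gamma_{t-1}+1+\log(4/\delta))}$, $\nu_t=\mathcal{B}_y\sum_{s=t-m}^{t-1}\sigma_{t-1}(x_s)+\beta_t$ (terms with $s<1$ omitted), $c_t=\nu_t(1+\sqrt{2\log(|\mathcal{Q}|t^2)})$. $\mathcal{F}_{t-1}$: history up to iteration $t-1$. $E^f(t)$: the event that $|\mu_{t-1}(x)-\rho_mf(x)|\le\nu_t\sigma_{t-1}(x)$ for all $x\in\mathcal{Q}$. *)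

theory Defs
  imports "HOL-Analysis.Analysis" "HOL-Probability.Probability"
begin

definition detN :: "nat \<Rightarrow> (nat \<Rightarrow> nat \<Rightarrow> real) \<Rightarrow> real" where
  "detN N A = (\<Sum>p | p permutes {..<N}. of_int (sign p) * (\<Prod>i<N. A i (p i)))"

definition psd_kernel_on :: "'a set \<Rightarrow> ('a \<Rightarrow> 'a \<Rightarrow> real) \<Rightarrow> bool" where
  "psd_kernel_on Q k \<longleftrightarrow> (\<forall>x\<in>Q. \<forall>y\<in>Q. k x y = k y x) \<and>
     (\<forall>a :: 'a \<Rightarrow> real. (\<Sum>x\<in>Q. \<Sum>y\<in>Q. a x * a y * k x y) \<ge> 0)"

(* f lies in the RKHS of k (on the finite set Q) with RKHS norm at most B:
   f = sum_y alpha_y k(.,y) on Q and ||f||_k^2 = alpha^T K alpha <= B^2 *)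
definition rkhs_norm_le :: "'a set \<Rightarrow> ('a \<Rightarrow> 'a \<Rightarrow> real) \<Rightarrow> ('a \<Rightarrow> real) \<Rightarrow> real \<Rightarrow> bool" where
  "rkhs_norm_le Q k f B \<longleftrightarrow> 0 \<le> B \<and> (\<exists>\<alpha> :: 'a \<Rightarrow> real.
      (\<forall>x\<in>Q. f x = (\<Sum>y\<in>Q. \<alpha> y * k x y)) \<and>
      (\<Sum>x\<in>Q. \<Sum>y\<in>Q. \<alpha> x * \<alpha> y * k x y) \<le> B\<^sup>2)"

(* (K_N + lambda I)^{-1} v, data indexed by {1..N}; K_N i j = k (xs i) (xs j) *)
definition reg_solve :: "('a \<Rightarrow> 'a \<Rightarrow> real) \<Rightarrow> real \<Rightarrow> (nat \<Rightarrow> 'a) \<Rightarrow> nat \<Rightarrow> (nat \<Rightarrow> real) \<Rightarrow> (nat \<Rightarrow> real)" where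
  "reg_solve k lam xs N v = (THE w. (\<forall>i\<in>{1..N}.
      (\<Sum>j=1..N. (k (xs i) (xs j) + (if i = j then lam else 0)) * w j) = v i)
      \<and> (\<forall>i. i \<notin> {1..N} \<longrightarrow> w i = 0))"

(* posterior mean mu_{t-1}: N = t-1 data points, censored observations yt *)
definition post_mean :: "('a \<Rightarrow> 'a \<Rightarrow> real) \<Rightarrow> real \<Rightarrow> (nat \<Rightarrow> 'a) \<Rightarrow> nat \<Rightarrow> (nat \<Rightarrow> real) \<Rightarrow> 'a \<Rightarrow> real" where
  "post_mean k lam xs N yt x = (\<Sum>i=1..N. k x (xs i) * reg_solve k lam xs N yt i)"

definition post_cov :: "('a \<Rightarrow> 'a \<Rightarrow> real) \<Rightarrow> real \<Rightarrow> (nat \<Rightarrow> 'a) \<Rightarrow> nat \<Rightarrow> 'a \<Rightarrow> 'a \<Rightarrow> real" where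
  "post_cov k lam xs N x x' =
     k x x' - (\<Sum>i=1..N. k x (xs i) * reg_solve k lam xs N (\<lambda>j. k (xs j) x') i)"

definition post_sd :: "('a \<Rightarrow> 'a \<Rightarrow> real) \<Rightarrow> real \<Rightarrow> (nat \<Rightarrow> 'a) \<Rightarrow> nat \<Rightarrow> 'a \<Rightarrow> real" where
  "post_sd k lam xs N x = sqrt (post_cov k lam xs N x x)"

definition info_gain :: "'a set \<Rightarrow> ('a \<Rightarrow> 'a \<Rightarrow> real) \<Rightarrow> real \<Rightarrow> nat \<Rightarrow> real" where
  "info_gain Q k lam N = Sup {(1/2) * ln (detN N (\<lambda>i j. (if i = j then 1 else 0) + k (A i) (A j) / lam))
                              | A :: nat \<Rightarrow> 'a. \<forall>i<N. A i \<in> Q}"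

definition censored :: "(nat \<Rightarrow> real) \<Rightarrow> (nat \<Rightarrow> nat) \<Rightarrow> nat \<Rightarrow> nat \<Rightarrow> nat \<Rightarrow> real" where
  "censored y d m t s = (if d s \<le> min m (t - s) then y s else 0)"

definition gaussian_rv :: "'w measure \<Rightarrow> ('w \<Rightarrow> real) \<Rightarrow> real \<Rightarrow> real \<Rightarrow> bool" where
  "gaussian_rv M Z mu v \<longleftrightarrow>
     (v = 0 \<and> Z \<in> borel_measurable M \<and> (AE w in M. Z w = mu)) \<or>
     (v > 0 \<and> distributed M lborel Z (normal_density mu (sqrt v)))"

definition gaussian_process_on :: "'w measure \<Rightarrow> 'a set \<Rightarrow> ('w \<Rightarrow> 'a \<Rightarrow> real) \<Rightarrow> ('a \<Rightarrow> real) \<Rightarrow> ('a \<Rightarrow> 'a \<Rightarrow> real) \<Rightarrow> bool" where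
  "gaussian_process_on M Q F m C \<longleftrightarrow> (\<forall>a :: 'a \<Rightarrow> real.
      gaussian_rv M (\<lambda>w. \<Sum>x\<in>Q. a x * F w x) (\<Sum>x\<in>Q. a x * m x) (\<Sum>x\<in>Q. \<Sum>y\<in>Q. a x * a y * C x y))"

end

theory Submission
  imports Defs
begin


lemma phi_shift_le:
  fixes a y :: real
  assumes "0 \<le> a" "0 \<le> a * y"
  shows "std_normal_density (a + y) \<le> exp (- a\<^sup>2 / 2) * std_normal_density y"
proof -
  have "exp (- (a + y)\<^sup>2 / 2) \<le> exp (- a\<^sup>2 / 2 + - y\<^sup>2 / 2)"
    using assms by (simp add: power2_eq_square algebra_simps divide_simps)
  also have "\<dots> = exp (- a\<^sup>2 / 2) * exp (- y\<^sup>2 / 2)" by (rule exp_add)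
  finally show ?thesis unfolding std_normal_density_def
    by (simp add: mult.left_commute divide_right_mono)
qed

lemma std_tail_integral:
  fixes a :: real assumes a: "0 \<le> a"
  shows "(\<integral>x. std_normal_density x * indicator {x. a < \<bar>x\<bar>} x \<partial>lborel) \<le> exp (- a\<^sup>2 / 2)"
proof -
  let ?phi = std_normal_density
  have int_phi: "integrable lborel ?phi" by simp
  have i1: "integrable lborel (\<lambda>x. ?phi x * indicator {a<..} x)"
    by (rule integrable_real_mult_indicator) auto
  have i2: "integrable lborel (\<lambda>x. ?phi x * indicator {..< -a} x)"
    by (rule integrable_real_mult_indicator) auto
  have eq: "(\<lambda>x. ?phi x * indicator {x. a < \<bar>x\<bar>} x) = (\<lambda>x. ?phi x * indicator {a<..} x + ?phi x * indicator {..< -a} x)"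
    using a by (auto simp: indicator_def fun_eq_iff)
  have I1: "(\<integral>x. ?phi x * indicator {a<..} x \<partial>lborel) = (\<integral>y. ?phi (a + y) * indicator {0<..} y \<partial>lborel)"
    using lborel_integral_real_affine[of 1 "\<lambda>x. ?phi x * indicator {a<..} x" a]
    by (simp add: indicator_def)
  have I2: "(\<integral>x. ?phi x * indicator {..< -a} x \<partial>lborel) = (\<integral>y. ?phi (-a + y) * indicator {..<0} y \<partial>lborel)"
    using lborel_integral_real_affine[of 1 "\<lambda>x. ?phi x * indicator {..< -a} x" "-a"]
    by (simp add: indicator_def)
  have j1: "integrable lborel (\<lambda>y. ?phi (a + y) * indicator {0<..} y)"
    using lborel_integrable_real_affine[OF i1, of 1 a] by (simp add: indicator_def)
  have j2: "integrable lborel (\<lambda>y. ?phi (-a + y) * indicator {..<0} y)"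
    using lborel_integrable_real_affine[OF i2, of 1 "-a"] by (simp add: indicator_def)
  have "(\<integral>x. ?phi x * indicator {x. a < \<bar>x\<bar>} x \<partial>lborel)
      = (\<integral>y. ?phi (a + y) * indicator {0<..} y + ?phi (-a + y) * indicator {..<0} y \<partial>lborel)"
    unfolding eq using i1 i2 j1 j2 I1 I2 by (simp add: Bochner_Integration.integral_add)
  also have "\<dots> \<le> (\<integral>y. exp (- a\<^sup>2 / 2) * ?phi y \<partial>lborel)"
  proof (rule integral_mono)
    show "integrable lborel (\<lambda>y. ?phi (a + y) * indicator {0<..} y + ?phi (-a + y) * indicator {..<0} y)"
      using j1 j2 by simp
    show "integrable lborel (\<lambda>y. exp (- a\<^sup>2 / 2) * ?phi y)" by simp
    fix y :: real
    show "?phi (a + y) * indicator {0<..} y + ?phi (-a + y) * indicator {..<0} y \<le> exp (- a\<^sup>2 / 2) * ?phi y"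
    proof (cases "y > 0")
      case True then show ?thesis using phi_shift_le[of a y] a by (simp add: indicator_def)
    next
      case False
      show ?thesis
      proof (cases "y < 0")
        case True
        have "?phi (-a + y) = ?phi (a + - y)"
          by (simp add: std_normal_density_def power2_eq_square algebra_simps)
        also have "\<dots> \<le> exp (- a\<^sup>2 / 2) * ?phi (- y)"
          using phi_shift_le[of a "-y"] a True by (simp add: mult_nonneg_nonpos)
        also have "?phi (- y) = ?phi y" by (simp add: std_normal_density_def)
        finally show ?thesis using True by (simp add: indicator_def)
      next
        case False
        with \<open>\<not> y > 0\<close> show ?thesis by (simp add: indicator_def)
      qed
    qed
  qed
  also have "\<dots> = exp (- a\<^sup>2 / 2)" by simp
  finally show ?thesis .
qed

lemma std_anti_integral:
  "(\<integral>x. std_normal_density x * indicator {1..} x \<partial>lborel) \<ge> exp (-2) / sqrt (2 * pi)"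
proof -
  have "(\<integral>x. std_normal_density 2 * indicator {1..2::real} x \<partial>lborel) \<le>
        (\<integral>x. std_normal_density x * indicator {1..} x \<partial>lborel)"
  proof (rule integral_mono)
    show "integrable lborel (\<lambda>x. std_normal_density 2 * indicator {1..2::real} x)" by simp
    show "integrable lborel (\<lambda>x. std_normal_density x * indicator {1..} x)"
      by (rule integrable_real_mult_indicator) auto
    fix x :: real
    show "std_normal_density 2 * indicator {1..2} x \<le> std_normal_density x * indicator {1..} x"
    proof (cases "x \<in> {1..2}")
      case True
      then have "x\<^sup>2 \<le> 2\<^sup>2" by (intro power_mono) auto
      then have "std_normal_density 2 \<le> std_normal_density x"
        unfolding std_normal_density_def by (intro mult_left_mono) auto
      then show ?thesis using True by (simp add: indicator_def)
    qed (auto simp: indicator_def)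
  qed
  moreover have "(\<integral>x. std_normal_density 2 * indicator {1..2::real} x \<partial>lborel) = exp (-2) / sqrt (2 * pi)"
    by (simp add: std_normal_density_def)
  ultimately show ?thesis by simp
qed



lemma std_dist_measure:
  assumes M: "prob_space M"
    and d: "distributed M lborel Z (\<lambda>x. ennreal (std_normal_density x))"
    and A: "A \<in> sets borel"
  shows "measure M {w\<in>space M. Z w \<in> A} = (\<integral>x. std_normal_density x * indicator A x \<partial>lborel)"
proof -
  have "(\<integral>x. std_normal_density x * indicator A x \<partial>lborel) = (\<integral>w. indicator A (Z w) \<partial>M)"
    by (rule distributed_integral[OF d]) (use A in auto)
  also have "\<dots> = (\<integral>w. indicator {w\<in>space M. Z w \<in> A} w \<partial>M)"
    by (rule Bochner_Integration.integral_cong) (auto simp: indicator_def)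
  also have "\<dots> = measure M {w\<in>space M. Z w \<in> A}"
    by (simp add: Int_absorb2 subset_iff)
  finally show ?thesis by simp
qed

lemma gaussian_rv_meas:
  assumes "gaussian_rv M Y mu v" shows "Y \<in> borel_measurable M"
  using assms unfolding gaussian_rv_def
  by (auto dest: distributed_measurable)

lemma gaussian_rv_tail:
  assumes M: "prob_space M" and g: "gaussian_rv M Y mu v"
    and v: "v = s\<^sup>2" and s: "0 \<le> s" and a: "0 \<le> a"
  shows "measure M {w\<in>space M. a * s < \<bar>Y w - mu\<bar>} \<le> exp (- a\<^sup>2 / 2)"
proof -
  interpret prob_space M by fact
  have Ym[measurable]: "Y \<in> borel_measurable M" by (rule gaussian_rv_meas[OF g])
  show ?thesis
  proof (cases "s = 0")
    case True
    then have "v = 0" using v by simp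
    then have ae: "AE w in M. Y w = mu" using g unfolding gaussian_rv_def by auto
    have "measure M {w\<in>space M. a * s < \<bar>Y w - mu\<bar>} = 0"
      using ae True by (subst prob_Collect_eq_0) (auto elim!: AE_mp)
    then show ?thesis by simp
  next
    case False
    then have sp: "s > 0" using s by simp
    have "distributed M lborel Y (normal_density mu (sqrt v))"
      using g sp v unfolding gaussian_rv_def by auto
    then have d0: "distributed M lborel Y (normal_density mu s)" using v s by simp
    have d: "distributed M lborel (\<lambda>w. (Y w - mu) / s) std_normal_density"
      using normal_standard_normal_convert[OF sp] d0 by simp
    have "{w\<in>space M. a * s < \<bar>Y w - mu\<bar>} = {w\<in>space M. (\<lambda>w. (Y w - mu) / s) w \<in> {x. a < \<bar>x\<bar>}}"
      using sp by (auto simp: abs_div pos_less_divide_eq)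
    also have "measure M \<dots> = (\<integral>x. std_normal_density x * indicator {x. a < \<bar>x\<bar>} x \<partial>lborel)"
      by (rule std_dist_measure[OF M d]) measurable
    also have "\<dots> \<le> exp (- a\<^sup>2 / 2)" by (rule std_tail_integral[OF a])
    finally show ?thesis .
  qed
qed

lemma gaussian_rv_anti:
  assumes M: "prob_space M" and g: "gaussian_rv M Y mu v"
    and v: "v = s\<^sup>2" and s: "0 \<le> s"
  shows "exp (-2) / sqrt (2 * pi) \<le> measure M {w\<in>space M. mu + s \<le> Y w}"
proof -
  interpret prob_space M by fact
  have Ym[measurable]: "Y \<in> borel_measurable M" by (rule gaussian_rv_meas[OF g])
  show ?thesis
  proof (cases "s = 0")
    case True
    then have "v = 0" using v by simp
    then have ae: "AE w in M. Y w = mu" using g unfolding gaussian_rv_def by auto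
    have "measure M {w\<in>space M. mu + s \<le> Y w} = 1"
      using ae True by (subst prob_Collect_eq_1) (auto elim!: AE_mp)
    moreover have "exp (-2) / sqrt (2 * pi) \<le> (1::real)"
    proof -
      have "exp (-2::real) \<le> 1" by simp
      moreover have "1 \<le> sqrt (2 * pi)" using pi_gt3 by simp
      ultimately show ?thesis by (simp add: divide_le_eq_1 del: real_sqrt_ge_1_iff exp_le_one_iff)
    qed
    ultimately show ?thesis by simp
  next
    case False
    then have sp: "s > 0" using s by simp
    have "distributed M lborel Y (normal_density mu (sqrt v))"
      using g sp v unfolding gaussian_rv_def by auto
    then have d0: "distributed M lborel Y (normal_density mu s)" using v s by simp
    have d: "distributed M lborel (\<lambda>w. (Y w - mu) / s) std_normal_density"
      using normal_standard_normal_convert[OF sp] d0 by simp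
    have "{w\<in>space M. mu + s \<le> Y w} = {w\<in>space M. (\<lambda>w. (Y w - mu) / s) w \<in> {1..}}"
      using sp by (auto simp: le_divide_eq)
    also have "measure M \<dots> = (\<integral>x. std_normal_density x * indicator {1..} x \<partial>lborel)"
      by (rule std_dist_measure[OF M d]) measurable
    finally show ?thesis using std_anti_integral by simp
  qed
qed



lemma delta_sum:
  fixes g :: "'a \<Rightarrow> real"
  assumes "finite Q" "x \<in> Q"
  shows "(\<Sum>v\<in>Q. (if v = x then s else 0) * g v) = s * g x"
  using assms by (subst sum.remove[of Q x]) auto

lemma rkhs_bound:
  assumes Q: "finite Q" and psd: "psd_kernel_on Q k" and r: "rkhs_norm_le Q k f B"
    and x: "x \<in> Q" and kx: "k x x \<le> 1"
  shows "\<bar>f x\<bar> \<le> B"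
proof -
  obtain \<alpha> where fa: "\<forall>y\<in>Q. f y = (\<Sum>z\<in>Q. \<alpha> z * k y z)"
    and A: "(\<Sum>u\<in>Q. \<Sum>v\<in>Q. \<alpha> u * \<alpha> v * k u v) \<le> B\<^sup>2" and B0: "0 \<le> B"
    using r unfolding rkhs_norm_le_def by blast
  have sym: "\<forall>u\<in>Q. \<forall>v\<in>Q. k u v = k v u" and pos: "\<And>b. 0 \<le> (\<Sum>u\<in>Q. \<Sum>v\<in>Q. b u * b v * k u v)"
    using psd unfolding psd_kernel_on_def by auto
  define s where "s = - f x"
  define b where "b = (\<lambda>u. \<alpha> u + (if u = x then s else 0))"
  let ?A = "\<Sum>u\<in>Q. \<Sum>v\<in>Q. \<alpha> u * \<alpha> v * k u v"
  have e1: "(\<Sum>v\<in>Q. \<alpha> v * k x v) = f x" using fa x by simp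
  have e2: "(\<Sum>u\<in>Q. \<alpha> u * k u x) = f x"
    using fa x sym by (auto intro!: sum.cong)
  have "(\<Sum>u\<in>Q. \<Sum>v\<in>Q. b u * b v * k u v) =
        (\<Sum>u\<in>Q. \<Sum>v\<in>Q. \<alpha> u * \<alpha> v * k u v) + (\<Sum>u\<in>Q. \<Sum>v\<in>Q. (if v = x then s else 0) * \<alpha> u * k u v)
        + (\<Sum>u\<in>Q. \<Sum>v\<in>Q. (if u = x then s else 0) * (\<alpha> v + (if v = x then s else 0)) * k u v)"
    unfolding b_def by (simp add: algebra_simps sum.distrib)
  also have "(\<Sum>u\<in>Q. \<Sum>v\<in>Q. (if v = x then s else 0) * \<alpha> u * k u v) = s * f x"
  proof -
    have "(\<Sum>u\<in>Q. \<Sum>v\<in>Q. (if v = x then s else 0) * \<alpha> u * k u v) = (\<Sum>u\<in>Q. s * (\<alpha> u * k u x))"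
      by (intro sum.cong refl) (simp add: delta_sum[OF Q x, of s "\<lambda>v. _ * k _ v", simplified mult.assoc] mult.assoc)
    also have "\<dots> = s * f x" using e2 by (simp add: sum_distrib_left[symmetric])
    finally show ?thesis .
  qed
  also have "(\<Sum>u\<in>Q. \<Sum>v\<in>Q. (if u = x then s else 0) * (\<alpha> v + (if v = x then s else 0)) * k u v)
       = s * f x + s * s * k x x"
  proof -
    have "(\<Sum>u\<in>Q. \<Sum>v\<in>Q. (if u = x then s else 0) * (\<alpha> v + (if v = x then s else 0)) * k u v)
      = (\<Sum>u\<in>Q. (if u = x then s else 0) * (\<Sum>v\<in>Q. (\<alpha> v + (if v = x then s else 0)) * k u v))"
      by (simp add: sum_distrib_left mult.assoc)
    also have "\<dots> = s * (\<Sum>v\<in>Q. (\<alpha> v + (if v = x then s else 0)) * k x v)"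
      by (rule delta_sum[OF Q x])
    also have "(\<Sum>v\<in>Q. (\<alpha> v + (if v = x then s else 0)) * k x v) = (\<Sum>v\<in>Q. \<alpha> v * k x v) + (\<Sum>v\<in>Q. (if v = x then s else 0) * k x v)"
      by (simp add: sum.distrib algebra_simps)
    also have "(\<Sum>v\<in>Q. (if v = x then s else 0) * k x v) = s * k x x" by (rule delta_sum[OF Q x])
    finally show ?thesis using e1 by (simp add: algebra_simps)
  qed
  finally have "0 \<le> ?A + s * f x + (s * f x + s * s * k x x)" using pos[of b] by simp
  then have "0 \<le> ?A - 2 * (f x)\<^sup>2 + (f x)\<^sup>2 * k x x" unfolding s_def by (simp add: power2_eq_square algebra_simps)
  moreover have "(f x)\<^sup>2 * k x x \<le> (f x)\<^sup>2" using kx by (simp add: mult_left_le)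
  ultimately have "(f x)\<^sup>2 \<le> B\<^sup>2" using A by linarith
  then show ?thesis using B0 by (metis abs_of_nonneg power2_le_imp_le power2_abs abs_ge_zero)
qed



lemma numeric_bound:
  "3 / 100 \<le> exp (-2) / sqrt (2 * pi) - 1 / 64 \<and> 1 / (4 * exp 1 * sqrt pi) \<le> 1 / 13"
proof
  have e1: "exp 1 < (272/100::real)" by (rule e_less_272)
  have e2: "2 \<le> exp (1::real)" using exp_ge_add_one_self[of 1] by simp
  have pi1: "pi \<le> 3.15" "3 \<le> pi" using pi_approx by simp_all
  have "exp (-2::real) = inverse (exp 1 ^ 2)"
    by (simp add: exp_minus exp_of_nat_mult[of 2 1, symmetric])
  moreover have "exp 1 ^ 2 \<le> (272/100::real)^2" using e1 e2 by (intro power_mono) auto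
  ultimately have ex2: "exp (-2::real) \<ge> inverse ((272/100)^2)"
    using e2 by (simp add: le_imp_inverse_le)
  have "sqrt (2 * pi) \<le> sqrt (2.51^2)" using pi1 by (subst real_sqrt_le_iff) (simp add: power2_eq_square)
  then have sq: "sqrt (2 * pi) \<le> 2.51" by simp
  have sqpos: "0 < sqrt (2 * pi)" by simp
  have "inverse ((272/100)^2) / 2.51 \<le> exp (-2) / sqrt (2 * pi)"
    using ex2 sq sqpos by (intro frac_le) auto
  moreover have "3 / 100 + 1/64 \<le> inverse ((272/100::real)^2) / 2.51" by (simp add: power2_eq_square inverse_eq_divide)
  ultimately show "3 / 100 \<le> exp (-2) / sqrt (2 * pi) - 1 / 64" by simp
  have "sqrt 3 \<le> sqrt pi" using pi1 by simp
  moreover have "1.7 \<le> sqrt (3::real)" by (rule real_le_rsqrt) (simp add: power2_eq_square)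
  ultimately have "1.7 \<le> sqrt pi" by linarith
  then have "2 * 1.7 \<le> exp 1 * sqrt pi" using e2
    by (intro mult_mono) auto
  then have "13 \<le> 4 * exp 1 * sqrt pi" by simp
  then show "1 / (4 * exp 1 * sqrt pi) \<le> 1 / 13" by (intro divide_left_mono) auto
qed



theorem lemma5:
  fixes Q :: "(real ^ 'n) set"
    and k :: "real ^ 'n \<Rightarrow> real ^ 'n \<Rightarrow> real"
    and f :: "real ^ 'n \<Rightarrow> real"
    and xstar :: "real ^ 'n"
    and Bf By R lam \<delta> :: real
    and D :: "nat pmf"
    and m t :: nat
    and xs :: "nat \<Rightarrow> real ^ 'n" and ys :: "nat \<Rightarrow> real" and ds :: "nat \<Rightarrow> nat"
    and M :: "'w measure"
    and Ft :: "'w \<Rightarrow> real ^ 'n \<Rightarrow> real"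
    and X :: "'w \<Rightarrow> real ^ 'n"
  defines "\<rho> \<equiv> measure_pmf.prob D {..m}"
    and "yt \<equiv> censored ys ds m t"
  defines "\<mu> \<equiv> post_mean k lam xs (t - 1) yt"
    and "\<sigma> \<equiv> post_sd k lam xs (t - 1)"
  defines "\<beta> \<equiv> Bf + (R + By) * sqrt (2 * (info_gain Q k lam (t - 1) + 1 + ln (4 / \<delta>)))"
  defines "\<nu> \<equiv> By * (\<Sum>s | 1 \<le> s \<and> s \<le> t - 1 \<and> t \<le> s + m. \<sigma> (xs s)) + \<beta>"
  defines "c \<equiv> \<nu> * (1 + sqrt (2 * ln (real (card Q) * (real t)\<^sup>2)))"
    and "p \<equiv> 1 / (4 * exp 1 * sqrt pi)"
  assumes Q: "finite Q" "Q \<noteq> {}"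
    and k_psd: "psd_kernel_on Q k"
    and k_le1: "\<forall>x\<in>Q. \<forall>y\<in>Q. k x y \<le> 1"
    and f_rkhs: "rkhs_norm_le Q k f Bf"
    and xstar: "xstar \<in> Q" "\<forall>x\<in>Q. f x \<le> f xstar"
    and params: "lam > 0" "R \<ge> 0" "By \<ge> 0" "0 < \<delta>" "\<delta> < 1" "m \<ge> 1" "t \<ge> 1"
    and rho_pos: "\<rho> > 0"
    and hist: "\<forall>s\<in>{1..t-1}. xs s \<in> Q \<and> \<bar>ys s\<bar> \<le> By"
    and Ef: "\<forall>x\<in>Q. \<bar>\<mu> x - \<rho> * f x\<bar> \<le> \<nu> * \<sigma> x"
    and M: "prob_space M"
    and GP: "gaussian_process_on M Q Ft \<mu> (\<lambda>x x'. \<nu>\<^sup>2 * post_cov k lam xs (t - 1) x x')"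
    and X_meas: "X \<in> M \<rightarrow>\<^sub>M count_space UNIV"
    and X_argmax: "\<forall>w\<in>space M. X w \<in> Q \<and> (\<forall>x\<in>Q. Ft w x \<le> Ft w (X w))"
  shows "prob_space.expectation M (\<lambda>w. f xstar - f (X w))
           \<le> 11 * c / (\<rho> * p) * prob_space.expectation M (\<lambda>w. \<sigma> (X w)) + 2 * Bf / (real t)\<^sup>2"
proof -
  interpret P: prob_space M by (rule M)
  have finQ: "finite Q" using Q by simp
  have Bf0: "0 \<le> Bf" using f_rkhs unfolding rkhs_norm_le_def by simp
  have fb: "\<And>x. x \<in> Q \<Longrightarrow> \<bar>f x\<bar> \<le> Bf"
    using rkhs_bound[OF finQ k_psd f_rkhs] k_le1 by blast
  define pc where "pc = (\<lambda>x. post_cov k lam xs (t - 1) x x)"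
  have gp1: "gaussian_rv M (\<lambda>w. Ft w x) (\<mu> x) (\<nu>\<^sup>2 * pc x)" if x: "x \<in> Q" for x
  proof -
    let ?a = "\<lambda>y. if y = x then 1 else (0::real)"
    have g: "gaussian_rv M (\<lambda>w. \<Sum>y\<in>Q. ?a y * Ft w y) (\<Sum>y\<in>Q. ?a y * \<mu> y)
        (\<Sum>u\<in>Q. \<Sum>v\<in>Q. ?a u * ?a v * (\<nu>\<^sup>2 * post_cov k lam xs (t - 1) u v))"
      using GP[unfolded gaussian_process_on_def, rule_format, of ?a] .
    have e1: "(\<lambda>w. \<Sum>y\<in>Q. ?a y * Ft w y) = (\<lambda>w. Ft w x)"
      using delta_sum[OF finQ x, of 1] by simp
    have e2: "(\<Sum>y\<in>Q. ?a y * \<mu> y) = \<mu> x" using delta_sum[OF finQ x, of 1] by simp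
    have "(\<Sum>u\<in>Q. \<Sum>v\<in>Q. ?a u * ?a v * (\<nu>\<^sup>2 * post_cov k lam xs (t - 1) u v))
        = (\<Sum>u\<in>Q. ?a u * (\<Sum>v\<in>Q. ?a v * (\<nu>\<^sup>2 * post_cov k lam xs (t - 1) u v)))"
      by (simp add: sum_distrib_left mult.assoc)
    also have "\<dots> = (\<Sum>v\<in>Q. ?a v * (\<nu>\<^sup>2 * post_cov k lam xs (t - 1) x v))"
      using delta_sum[OF finQ x, of 1] by simp
    also have "\<dots> = \<nu>\<^sup>2 * pc x" using delta_sum[OF finQ x, of 1] by (simp add: pc_def)
    finally show ?thesis using g e1 e2 by simp
  qed
  have vnn: "0 \<le> \<nu>\<^sup>2 * pc x" if "x \<in> Q" for x
  proof -
    have "\<nu>\<^sup>2 * pc x = 0 \<or> \<nu>\<^sup>2 * pc x > 0" using gp1[OF that] unfolding gaussian_rv_def by blast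
    then show ?thesis by linarith
  qed
  have Ftm[measurable]: "(\<lambda>w. Ft w x) \<in> borel_measurable M" if "x \<in> Q" for x
    using gaussian_rv_meas[OF gp1[OF that]] .
  have Xg[measurable]: "(\<lambda>w. g (X w)) \<in> borel_measurable M" for g :: "real ^ 'n \<Rightarrow> real"
    by (rule measurable_compose[OF X_meas]) simp
  have Xs: "{w \<in> space M. X w \<in> A} \<in> sets M" for A
  proof -
    have "X -` A \<inter> space M \<in> sets M" by (rule measurable_sets[OF X_meas]) simp
    moreover have "X -` A \<inter> space M = {w \<in> space M. X w \<in> A}" by auto
    ultimately show ?thesis by simp
  qed
  have XQ: "\<And>w. w \<in> space M \<Longrightarrow> X w \<in> Q" using X_argmax by blast
  have Xmax: "\<And>w x. w \<in> space M \<Longrightarrow> x \<in> Q \<Longrightarrow> Ft w x \<le> Ft w (X w)" using X_argmax by blast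
  let ?r = "\<lambda>w. f xstar - f (X w)"
  let ?Es = "P.expectation (\<lambda>w. \<sigma> (X w))"
  have pos_p: "0 < p" unfolding p_def by simp
  have lnN: "0 \<le> ln (real (card Q) * (real t)\<^sup>2)"
  proof -
    have "1 \<le> card Q" using Q by (simp add: Suc_leI card_gt_0_iff)
    moreover have "1 \<le> (real t)\<^sup>2" using params(7) by simp
    ultimately have "1 * 1 \<le> real (card Q) * (real t)\<^sup>2"
      by (intro mult_mono) auto
    then show ?thesis by simp
  qed
  define a where "a = sqrt (2 * ln (real (card Q) * (real t)\<^sup>2))"
  have a0: "0 \<le> a" unfolding a_def using lnN by simp
  have c_eq: "c = \<nu> * (1 + a)" unfolding c_def a_def by simp
  show ?thesis
  proof (cases "\<nu> \<le> 0")
    case True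
    have deg: "\<nu> * \<sigma> x = 0 \<and> \<mu> x = \<rho> * f x \<and> \<nu>\<^sup>2 * pc x = 0" if x: "x \<in> Q" for x
    proof (cases "\<nu> = 0")
      case True
      moreover have "\<bar>\<mu> x - \<rho> * f x\<bar> \<le> \<nu> * \<sigma> x" using Ef x by blast
      ultimately show ?thesis by simp
    next
      case False
      then have "\<nu>\<^sup>2 > 0" by simp
      then have "0 \<le> pc x" using vnn[OF x] by (simp add: zero_le_mult_iff)
      then have s0: "0 \<le> \<sigma> x" unfolding \<sigma>_def post_sd_def pc_def by simp
      have "\<nu> * \<sigma> x \<le> 0" using s0 True by (simp add: mult_nonpos_nonneg)
      moreover have "\<bar>\<mu> x - \<rho> * f x\<bar> \<le> \<nu> * \<sigma> x" using Ef x by blast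
      ultimately have ns: "\<nu> * \<sigma> x = 0" and "\<mu> x = \<rho> * f x" by linarith+
      then have "\<sigma> x = 0" using False by simp
      then have "pc x = 0" unfolding \<sigma>_def post_sd_def pc_def by simp
      then show ?thesis using ns \<open>\<mu> x = \<rho> * f x\<close> by simp
    qed
    have ae1: "AE w in M. Ft w x = \<mu> x" if x: "x \<in> Q" for x
    proof -
      have v0: "\<nu>\<^sup>2 * pc x = 0" using deg[OF x] by blast
      show ?thesis using gp1[OF x] unfolding gaussian_rv_def v0 by (elim disjE conjE) simp_all
    qed
    have ae: "AE w in M. \<forall>x\<in>Q. Ft w x = \<mu> x"
      by (rule AE_finite_allI[OF finQ]) (rule ae1)
    have aer: "AE w in M. ?r w \<le> 0"
      using ae
    proof (rule AE_mp, intro AE_I2 impI)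
      fix w assume w: "w \<in> space M" and h: "\<forall>x\<in>Q. Ft w x = \<mu> x"
      have "\<rho> * f xstar \<le> \<rho> * f (X w)"
        using Xmax[OF w xstar(1)] h deg XQ[OF w] xstar(1) by simp
      then show "?r w \<le> 0" using rho_pos by simp
    qed
    have "P.expectation ?r \<le> 0"
    proof -
      have "0 \<le> P.expectation (\<lambda>w. - ?r w)"
      proof (rule integral_nonneg_AE)
        show "AE w in M. 0 \<le> - ?r w" using aer by eventually_elim simp
      qed
      moreover have "P.expectation (\<lambda>w. - ?r w) = - P.expectation ?r"
        by (rule Bochner_Integration.integral_minus)
      ultimately show ?thesis by linarith
    qed
    moreover have "c * ?Es = 0"
    proof (cases "\<nu> = 0")
      case True then show ?thesis using c_eq by simp
    next
      case False
      have z: "\<And>w. w \<in> space M \<Longrightarrow> \<sigma> (X w) = 0" using deg XQ False by simp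
      have "?Es = 0" by (rule integral_eq_zero_AE, rule AE_I2) (rule z)
      then show ?thesis by simp
    qed
    moreover have "0 \<le> 2 * Bf / (real t)\<^sup>2" using Bf0 by simp
    moreover have "11 * c / (\<rho> * p) * ?Es = 0"
      using \<open>c * ?Es = 0\<close> by (metis mult_zero_left mult_zero_right times_divide_eq_left mult.commute mult.assoc)
    ultimately show ?thesis by linarith
  next
    case False
    then have nupos: "0 < \<nu>" by simp
    have pc0: "0 \<le> pc x" if "x \<in> Q" for x
      using vnn[OF that] nupos by (simp add: zero_le_mult_iff)
    have s0: "0 \<le> \<sigma> x" if "x \<in> Q" for x
      using pc0[OF that] unfolding \<sigma>_def post_sd_def pc_def by simp
    have vsq: "\<nu>\<^sup>2 * pc x = (\<nu> * \<sigma> x)\<^sup>2" if "x \<in> Q" for x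
      using pc0[OF that] unfolding \<sigma>_def post_sd_def pc_def by (simp add: power_mult_distrib)
    have tail: "P.prob {w\<in>space M. b * (\<nu> * \<sigma> x) < \<bar>Ft w x - \<mu> x\<bar>} \<le> exp (- b\<^sup>2 / 2)"
      if "x \<in> Q" "0 \<le> b" for x b
      by (rule gaussian_rv_tail[OF M gp1[OF that(1)] vsq[OF that(1)]])
         (use s0[OF that(1)] nupos that(2) in auto)
    have anti: "exp (-2) / sqrt (2 * pi) \<le> P.prob {w\<in>space M. \<mu> xstar + \<nu> * \<sigma> xstar \<le> Ft w xstar}"
      by (rule gaussian_rv_anti[OF M gp1[OF xstar(1)] vsq[OF xstar(1)]])
         (use s0[OF xstar(1)] nupos in auto)
    have Es0: "0 \<le> ?Es" by (rule integral_nonneg_AE, rule AE_I2) (use s0 XQ in blast)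
    have c0: "0 \<le> c" using c_eq nupos a0 by simp
    have rb: "\<bar>?r w\<bar> \<le> 2 * Bf" if w: "w \<in> space M" for w
    proof -
      have "\<bar>f (X w)\<bar> \<le> Bf" by (rule fb[OF XQ[OF w]])
      moreover have "\<bar>f xstar\<bar> \<le> Bf" by (rule fb[OF xstar(1)])
      ultimately show ?thesis by linarith
    qed
    have rm: "?r \<in> borel_measurable M" using Xg[of "\<lambda>y. f xstar - f y"] by simp
    have int_r: "integrable M ?r"
      by (rule P.integrable_const_bound[where B="2 * Bf", OF _ rm]) (rule AE_I2, simp add: rb)
    have sb_all: "\<bar>\<sigma> (X w)\<bar> \<le> (\<Sum>x\<in>Q. \<bar>\<sigma> x\<bar>)" if w: "w \<in> space M" for w
      using member_le_sum[of "X w" Q "\<lambda>x. \<bar>\<sigma> x\<bar>"] XQ[OF w] finQ by simp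
    have int_s: "integrable M (\<lambda>w. \<sigma> (X w))"
      by (rule P.integrable_const_bound[where B="\<Sum>x\<in>Q. \<bar>\<sigma> x\<bar>", OF _ Xg]) (rule AE_I2, simp add: sb_all)
    have first0: "0 \<le> 11 * c / (\<rho> * p) * ?Es"
      using c0 rho_pos pos_p Es0 by simp
    show ?thesis
    proof (cases "t = 1")
      case True
      have "P.expectation ?r \<le> P.expectation (\<lambda>w. 2 * Bf)"
      proof (rule integral_mono_AE[OF int_r])
        show "integrable M (\<lambda>w. 2 * Bf)" by simp
        show "AE w in M. ?r w \<le> 2 * Bf" by (rule AE_I2) (use rb in force)
      qed
      then have "P.expectation ?r \<le> 2 * Bf" by (simp add: P.prob_space)
      then show ?thesis using first0 True by simp
    next
      case False
      then have t2: "2 \<le> t" using params(7) by simp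
      define N where "N = real (card Q) * (real t)\<^sup>2"
      have cQ1: "1 \<le> real (card Q)" using Q by (simp add: Suc_leI card_gt_0_iff)
      have t4: "4 \<le> (real t)\<^sup>2"
      proof -
        have "(2::real)\<^sup>2 \<le> (real t)\<^sup>2" using t2 by (intro power_mono) auto
        then show ?thesis by simp
      qed
      have N4: "4 \<le> N" unfolding N_def using mult_mono[OF cQ1 t4] by simp
      have NQ: "real (card Q) \<le> N"
      proof -
        have "real (card Q) * 1 \<le> real (card Q) * (real t)\<^sup>2" using t4 by (intro mult_left_mono) auto
        then show ?thesis unfolding N_def by simp
      qed
      have Npos: "0 < N" using N4 by simp
      have a2: "a\<^sup>2 = 2 * ln N" unfolding a_def N_def using lnN by simp
      have expa: "exp (- a\<^sup>2 / 2) = 1 / N"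
        using a2 Npos by (simp add: exp_minus exp_ln inverse_eq_divide)
      have exp4: "exp (- (1 + 2 * a)\<^sup>2 / 2) \<le> 1 / N ^ 4"
      proof -
        have "exp (- (1 + 2 * a)\<^sup>2 / 2) \<le> exp (- (4 * ln N))"
          using a2 a0 by (simp add: power2_eq_square algebra_simps)
        moreover have "ln (N ^ 4) = 4 * ln N" using ln_realpow[of N 4] by simp
        then have "exp (4 * ln N) = N ^ 4" using Npos by (metis exp_ln zero_less_power)
        then have "exp (- (4 * ln N)) = 1 / N ^ 4" by (simp add: exp_minus inverse_eq_divide)
        ultimately show ?thesis by simp
      qed
      have QN4: "real (card Q) / N ^ 4 \<le> 1 / 64"
      proof -
        have "real (card Q) / N ^ 4 \<le> N / N ^ 4" using NQ Npos by (intro divide_right_mono) auto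
        also have "N / N ^ 4 = 1 / N ^ 3" using Npos by (simp add: power_eq_if)
        also have "1 / N ^ 3 \<le> 1 / 4 ^ 3" using N4 by (intro divide_left_mono power_mono mult_pos_pos) auto
        finally show ?thesis by simp
      qed
      have evx: "{w\<in>space M. b * (\<nu> * \<sigma> x) < \<bar>Ft w x - \<mu> x\<bar>} \<in> sets M" if "x \<in> Q" for x b
        using Ftm[OF that] by measurable
      define Gc where "Gc = (\<Union>x\<in>Q. {w\<in>space M. a * (\<nu> * \<sigma> x) < \<bar>Ft w x - \<mu> x\<bar>})"
      have GcM: "Gc \<in> sets M" unfolding Gc_def by (intro sets.finite_UN finQ evx)
      have PGc: "P.prob Gc \<le> 1 / (real t)\<^sup>2"
      proof -
        have "P.prob Gc \<le> (\<Sum>x\<in>Q. P.prob {w\<in>space M. a * (\<nu> * \<sigma> x) < \<bar>Ft w x - \<mu> x\<bar>})"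
          unfolding Gc_def by (rule P.finite_measure_subadditive_finite[OF finQ]) (use evx in blast)
        also have "\<dots> \<le> (\<Sum>x\<in>Q. exp (- a\<^sup>2 / 2))"
          by (rule sum_mono) (rule tail[OF _ a0])
        also have "\<dots> = real (card Q) / N" using expa by simp
        also have "\<dots> = 1 / (real t)\<^sup>2" unfolding N_def using cQ1 by simp
        finally show ?thesis .
      qed
      define S where "S = {x\<in>Q. 2 * c * \<sigma> x < \<rho> * (f xstar - f x)}"
      have SQ: "S \<subseteq> Q" unfolding S_def by auto
      have finS: "finite S" using finite_subset[OF SQ finQ] .
      define Hc where "Hc = (\<Union>x\<in>S. {w\<in>space M. (1 + 2 * a) * (\<nu> * \<sigma> x) < \<bar>Ft w x - \<mu> x\<bar>})"
      have HcM: "Hc \<in> sets M" unfolding Hc_def by (intro sets.finite_UN finS evx) (use SQ in blast)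
      have PHc: "P.prob Hc \<le> 1 / 64"
      proof -
        have "P.prob Hc \<le> (\<Sum>x\<in>S. P.prob {w\<in>space M. (1 + 2 * a) * (\<nu> * \<sigma> x) < \<bar>Ft w x - \<mu> x\<bar>})"
          unfolding Hc_def by (rule P.finite_measure_subadditive_finite[OF finS]) (use evx SQ in blast)
        also have "\<dots> \<le> (\<Sum>x\<in>S. 1 / N ^ 4)"
        proof (rule sum_mono)
          fix x assume "x \<in> S"
          then have "x \<in> Q" using SQ by auto
          have "P.prob {w\<in>space M. (1 + 2 * a) * (\<nu> * \<sigma> x) < \<bar>Ft w x - \<mu> x\<bar>} \<le> exp (- (1 + 2 * a)\<^sup>2 / 2)"
            by (rule tail[OF \<open>x \<in> Q\<close>]) (use a0 in simp)
          then show "P.prob {w\<in>space M. (1 + 2 * a) * (\<nu> * \<sigma> x) < \<bar>Ft w x - \<mu> x\<bar>} \<le> 1 / N ^ 4"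
            using exp4 by linarith
        qed
        also have "\<dots> = real (card S) / N ^ 4" by simp
        also have "\<dots> \<le> real (card Q) / N ^ 4"
          using card_mono[OF finQ SQ] Npos by (intro divide_right_mono) auto
        finally show ?thesis using QN4 by linarith
      qed
      define A where "A = {w\<in>space M. \<mu> xstar + \<nu> * \<sigma> xstar \<le> Ft w xstar}"
      have AM: "A \<in> sets M" unfolding A_def using Ftm[OF xstar(1)] by measurable
      define NS where "NS = {w\<in>space M. X w \<in> Q - S}"
      have NSM: "NS \<in> sets M" unfolding NS_def by (rule Xs)
      have ANS: "A \<subseteq> NS \<union> Hc"
      proof
        fix w assume wA: "w \<in> A"
        then have w: "w \<in> space M" unfolding A_def by simp
        show "w \<in> NS \<union> Hc"
        proof (cases "w \<in> Hc")
          case False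
          have "X w \<notin> S"
          proof
            assume xs: "X w \<in> S"
            let ?x = "X w"
            have xQ: "?x \<in> Q" using XQ[OF w] .
            have h1: "\<bar>Ft w ?x - \<mu> ?x\<bar> \<le> (1 + 2 * a) * (\<nu> * \<sigma> ?x)"
              using False xs w unfolding Hc_def by (auto simp: not_less)
            have h2: "\<bar>\<mu> ?x - \<rho> * f ?x\<bar> \<le> \<nu> * \<sigma> ?x" using Ef xQ by blast
            have h3: "2 * c * \<sigma> ?x < \<rho> * (f xstar - f ?x)" using xs unfolding S_def by simp
            have h4: "\<mu> xstar + \<nu> * \<sigma> xstar \<le> Ft w xstar" using wA unfolding A_def by simp
            have h5: "\<bar>\<mu> xstar - \<rho> * f xstar\<bar> \<le> \<nu> * \<sigma> xstar" using Ef xstar(1) by blast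
            have h6: "Ft w xstar \<le> Ft w ?x" using Xmax[OF w xstar(1)] .
            have ce: "2 * c * \<sigma> ?x = 2 * (\<nu> * \<sigma> ?x) + 2 * (a * (\<nu> * \<sigma> ?x))"
              unfolding c_eq by (simp add: algebra_simps)
            have ce2: "(1 + 2 * a) * (\<nu> * \<sigma> ?x) = \<nu> * \<sigma> ?x + 2 * (a * (\<nu> * \<sigma> ?x))"
              by (simp add: algebra_simps)
            have ce3: "\<rho> * (f xstar - f ?x) = \<rho> * f xstar - \<rho> * f ?x" by (simp add: algebra_simps)
            show False using abs_le_D1[OF h1] abs_le_D1[OF h2] abs_le_D2[OF h5] h3 h4 h6 ce ce2 ce3 by linarith
          qed
          then show ?thesis using XQ[OF w] w unfolding NS_def by simp
        qed simp
      qed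
      have q0: "3 / 100 \<le> exp (-2) / sqrt (2 * pi) - 1 / 64" and p13: "p \<le> 1 / 13"
        using numeric_bound unfolding p_def by auto
      have PNS: "3 / 100 \<le> P.prob NS"
      proof -
        have "P.prob A \<le> P.prob (NS \<union> Hc)"
          by (rule P.finite_measure_mono[OF ANS]) (use NSM HcM in auto)
        also have "\<dots> \<le> P.prob NS + P.prob Hc"
          by (rule measure_subadditive[OF NSM HcM]) (simp_all add: P.emeasure_eq_measure)
        finally show ?thesis using anti PHc q0 unfolding A_def by linarith
      qed
      have xstarQS: "xstar \<in> Q - S"
        using xstar(1) s0[OF xstar(1)] c0 unfolding S_def by (auto simp: mult_less_0_iff)
      define sb where "sb = Min (\<sigma> ` (Q - S))"
      have finQS: "finite (\<sigma> ` (Q - S))" using finQ by simp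
      have neQS: "\<sigma> ` (Q - S) \<noteq> {}" using xstarQS by auto
      obtain xb where xb: "xb \<in> Q - S" "\<sigma> xb = sb"
        using Min_in[OF finQS neQS] unfolding sb_def by auto
      have sb_le: "sb \<le> \<sigma> x" if "x \<in> Q - S" for x
        unfolding sb_def using Min_le[OF finQS] that by auto
      have sb0: "0 \<le> sb" using s0 xb by auto
      have int_ind: "integrable M (\<lambda>w. sb * indicator NS w)"
      proof (rule P.integrable_const_bound[where B=sb])
        show "AE w in M. norm (sb * indicator NS w) \<le> sb" by (rule AE_I2) (simp add: indicator_def sb0)
        show "(\<lambda>w. sb * indicator NS w) \<in> borel_measurable M" using NSM by measurable
      qed
      have "sb * P.prob NS \<le> ?Es"
      proof -
        have "P.expectation (\<lambda>w. sb * indicator NS w) \<le> ?Es"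
        proof (rule integral_mono[OF int_ind int_s])
          fix w assume w: "w \<in> space M"
          show "sb * indicator NS w \<le> \<sigma> (X w)"
            using sb_le[of "X w"] s0[OF XQ[OF w]] unfolding NS_def by (auto simp: indicator_def)
        qed
        moreover have "P.expectation (\<lambda>w. sb * indicator NS w) = sb * P.prob NS"
        proof -
          have nsi: "NS \<inter> space M = NS" unfolding NS_def by auto
          show ?thesis by (simp add: nsi)
        qed
        ultimately show ?thesis by linarith
      qed
      then have sbE: "sb * (3 / 100) \<le> ?Es" using PNS sb0
        by (meson mult_left_mono order_trans)
      have pw: "?r w \<le> c / \<rho> * (3 * sb + \<sigma> (X w)) + 2 * Bf * indicator Gc w" if w: "w \<in> space M" for w
      proof (cases "w \<in> Gc")
        case True
        have "0 \<le> c / \<rho> * (3 * sb + \<sigma> (X w))"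
          using c0 rho_pos sb0 s0[OF XQ[OF w]] by simp
        then show ?thesis using rb[OF w] True by simp
      next
        case False
        let ?x = "X w"
        have xQ: "?x \<in> Q" using XQ[OF w] .
        have xbQ: "xb \<in> Q" using xb by simp
        have g1: "\<bar>Ft w ?x - \<mu> ?x\<bar> \<le> a * (\<nu> * \<sigma> ?x)" using False w xQ unfolding Gc_def by (auto simp: not_less)
        have g2: "\<bar>Ft w xb - \<mu> xb\<bar> \<le> a * (\<nu> * \<sigma> xb)" using False w xbQ unfolding Gc_def by (auto simp: not_less)
        have h1: "\<bar>\<mu> ?x - \<rho> * f ?x\<bar> \<le> \<nu> * \<sigma> ?x" using Ef xQ by blast
        have h2: "\<bar>\<mu> xb - \<rho> * f xb\<bar> \<le> \<nu> * \<sigma> xb" using Ef xbQ by blast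
        have h3: "\<rho> * (f xstar - f xb) \<le> 2 * c * \<sigma> xb" using xb unfolding S_def by auto
        have h4: "Ft w xb \<le> Ft w ?x" using Xmax[OF w xbQ] .
        have c1: "c * \<sigma> xb = \<nu> * \<sigma> xb + a * (\<nu> * \<sigma> xb)" unfolding c_eq by (simp add: algebra_simps)
        have c2: "c * \<sigma> ?x = \<nu> * \<sigma> ?x + a * (\<nu> * \<sigma> ?x)" unfolding c_eq by (simp add: algebra_simps)
        have ce3: "\<rho> * (f xstar - f xb) = \<rho> * f xstar - \<rho> * f xb" by (simp add: algebra_simps)
        have ce4: "\<rho> * ?r w = \<rho> * f xstar - \<rho> * f ?x" by (simp add: algebra_simps)
        have ce5: "2 * c * \<sigma> xb = 2 * (c * \<sigma> xb)" by simp
        have "\<rho> * ?r w \<le> 3 * (c * \<sigma> xb) + c * \<sigma> ?x"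
          using abs_le_D1[OF g1] abs_le_D2[OF g1] abs_le_D1[OF g2] abs_le_D2[OF g2]
            abs_le_D1[OF h1] abs_le_D2[OF h1] abs_le_D1[OF h2] abs_le_D2[OF h2] h3 h4 c1 c2 ce3 ce4 ce5
          by linarith
        then have "\<rho> * ?r w \<le> c * (3 * sb + \<sigma> ?x)" using xb(2) by (simp add: algebra_simps)
        then have "?r w \<le> c / \<rho> * (3 * sb + \<sigma> ?x)" using rho_pos
          by (simp add: pos_le_divide_eq mult.commute)
        moreover have "0 \<le> 2 * Bf * indicator Gc w" using Bf0 by simp
        ultimately show ?thesis by linarith
      qed
      have int_G: "integrable M (\<lambda>w. 2 * Bf * indicator Gc w)"
      proof (rule P.integrable_const_bound[where B="2 * Bf"])
        show "AE w in M. norm (2 * Bf * indicator Gc w) \<le> 2 * Bf" by (rule AE_I2) (simp add: indicator_def Bf0)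
        show "(\<lambda>w. 2 * Bf * indicator Gc w) \<in> borel_measurable M" using GcM by measurable
      qed
      have int_rhs: "integrable M (\<lambda>w. c / \<rho> * (3 * sb + \<sigma> (X w)))"
        using int_s by simp
      have "P.expectation ?r \<le> P.expectation (\<lambda>w. c / \<rho> * (3 * sb + \<sigma> (X w)) + 2 * Bf * indicator Gc w)"
        by (rule integral_mono[OF int_r]) (use int_rhs int_G pw in simp_all)
      also have "\<dots> = c / \<rho> * (3 * sb + ?Es) + 2 * Bf * P.prob Gc"
      proof -
        have "P.expectation (\<lambda>w. c / \<rho> * (3 * sb + \<sigma> (X w)) + 2 * Bf * indicator Gc w)
            = P.expectation (\<lambda>w. c / \<rho> * (3 * sb + \<sigma> (X w))) + P.expectation (\<lambda>w. 2 * Bf * indicator Gc w)"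
          by (rule Bochner_Integration.integral_add[OF int_rhs int_G])
        moreover have "P.expectation (\<lambda>w. c / \<rho> * (3 * sb + \<sigma> (X w))) = c / \<rho> * (3 * sb + ?Es)"
          using int_s by (simp add: P.prob_space)
        moreover have "P.expectation (\<lambda>w. 2 * Bf * indicator Gc w) = 2 * Bf * P.prob Gc"
        proof -
          have gsi: "Gc \<inter> space M = Gc" unfolding Gc_def by auto
          show ?thesis by (simp add: gsi)
        qed
        ultimately show ?thesis by linarith
      qed
      also have "\<dots> \<le> 11 * c / (\<rho> * p) * ?Es + 2 * Bf / (real t)\<^sup>2"
      proof -
        have "3 * sb \<le> 100 * ?Es" using sbE by simp
        moreover have "143 \<le> 11 / p" using p13 pos_p by (simp add: field_simps)
        moreover have "143 * ?Es \<le> 11 / p * ?Es" using Es0 \<open>143 \<le> 11 / p\<close> by (rule mult_right_mono[rotated])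
        ultimately have "3 * sb + ?Es \<le> 11 / p * ?Es" using Es0 by linarith
        then have "c / \<rho> * (3 * sb + ?Es) \<le> c / \<rho> * (11 / p * ?Es)"
          using c0 rho_pos by (intro mult_left_mono) auto
        also have "\<dots> = 11 * c / (\<rho> * p) * ?Es" by (simp add: field_simps)
        finally have 1: "c / \<rho> * (3 * sb + ?Es) \<le> 11 * c / (\<rho> * p) * ?Es" .
        have 2: "2 * Bf * P.prob Gc \<le> 2 * Bf / (real t)\<^sup>2"
          using mult_left_mono[OF PGc, of "2 * Bf"] Bf0 by simp
        show ?thesis using 1 2 by linarith
      qed
      finally show ?thesis .
    qed
  qed
qed

end
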